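(* Let $L$ be a finite-dimensional Lie algebra over a field $F$ and let $A_1/B_1$, $A_2/B_2$ be chief factors of $L$. Then (i) if $A_1/B_1$ and $A_2/B_2$ are $L$-isomorphic, then $C_L(A_1/B_1) = C_L(A_2/B_2)$; (ii) if $A_1/B_1$ and $A_2/B_2$ are non-abelian, then they are $L$-isomorphic if and only if $C_L(A_1/B_1) = C_L(A_2/B_2)$.
   Context: A chief factor of $L$ is a quotient $A/B$ of ideals $B \subsetneq A$ of $L$ with no ideal of $L$ strictly between $B$ and $A$. Two chief factors are $L$-isomorphic if they are isomorphic as $L$-modules (under the induced adjoint action). The centraliser of a chief factor is $C_L(A/B) = \{x \in L : [x,A] \subseteq B\}$. *)

theory Defs
  imports Main "HOL.Vector_Spaces"
begin

definition lie_algebra :: "('k::field \<Rightarrow> 'v::ab_group_add \<Rightarrow> 'v) \<Rightarrow> ('v \<Rightarrow> 'v \<Rightarrow> 'v) \<Rightarrow> bool" where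
  "lie_algebra scale br \<longleftrightarrow> vector_space scale \<and>
     (\<forall>x y z. br (x + y) z = br x z + br y z) \<and>
     (\<forall>x y z. br x (y + z) = br x y + br x z) \<and>
     (\<forall>c x y. br (scale c x) y = scale c (br x y)) \<and>
     (\<forall>c x y. br x (scale c y) = scale c (br x y)) \<and>
     (\<forall>x. br x x = 0) \<and>
     (\<forall>x y z. br x (br y z) + br y (br z x) + br z (br x y) = 0)"

definition finite_dimensional :: "('k::field \<Rightarrow> 'v::ab_group_add \<Rightarrow> 'v) \<Rightarrow> bool" where
  "finite_dimensional scale \<longleftrightarrow> (\<exists>S. finite S \<and> module.span scale S = UNIV)"

definition lie_ideal :: "('k::field \<Rightarrow> 'v::ab_group_add \<Rightarrow> 'v) \<Rightarrow> ('v \<Rightarrow> 'v \<Rightarrow> 'v) \<Rightarrow> 'v set \<Rightarrow> bool" where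
  "lie_ideal scale br I \<longleftrightarrow> module.subspace scale I \<and> (\<forall>x a. a \<in> I \<longrightarrow> br x a \<in> I)"

definition chief_factor :: "('k::field \<Rightarrow> 'v::ab_group_add \<Rightarrow> 'v) \<Rightarrow> ('v \<Rightarrow> 'v \<Rightarrow> 'v) \<Rightarrow> 'v set \<Rightarrow> 'v set \<Rightarrow> bool" where
  "chief_factor scale br A B \<longleftrightarrow> lie_ideal scale br A \<and> lie_ideal scale br B \<and> B \<subset> A \<and>
     \<not> (\<exists>I. lie_ideal scale br I \<and> B \<subset> I \<and> I \<subset> A)"

definition centraliser :: "('v \<Rightarrow> 'v \<Rightarrow> 'v) \<Rightarrow> 'v set \<Rightarrow> 'v set \<Rightarrow> 'v set" where
  "centraliser br A B = {x. \<forall>a\<in>A. br x a \<in> B}"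

definition abelian_factor :: "('v \<Rightarrow> 'v \<Rightarrow> 'v) \<Rightarrow> 'v set \<Rightarrow> 'v set \<Rightarrow> bool" where
  "abelian_factor br A B \<longleftrightarrow> (\<forall>a\<in>A. \<forall>b\<in>A. br a b \<in> B)"

definition coset :: "'v::ab_group_add \<Rightarrow> 'v set \<Rightarrow> 'v set" where
  "coset a B = (\<lambda>b. a + b) ` B"

definition quot :: "'v::ab_group_add set \<Rightarrow> 'v set \<Rightarrow> 'v set set" where
  "quot A B = {coset a B | a. a \<in> A}"

text \<open>L-isomorphism of factors A1/B1 and A2/B2: a bijection of the quotients which is
linear and commutes with the induced adjoint action x.(a+B) = [x,a]+B.\<close>
definition L_isomorphic :: "('k::field \<Rightarrow> 'v::ab_group_add \<Rightarrow> 'v) \<Rightarrow> ('v \<Rightarrow> 'v \<Rightarrow> 'v) \<Rightarrow>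
    'v set \<Rightarrow> 'v set \<Rightarrow> 'v set \<Rightarrow> 'v set \<Rightarrow> bool" where
  "L_isomorphic scale br A1 B1 A2 B2 \<longleftrightarrow>
    (\<exists>f. bij_betw f (quot A1 B1) (quot A2 B2) \<and>
      (\<forall>a\<in>A1. \<forall>b\<in>A1. \<forall>a'\<in>A2. \<forall>b'\<in>A2.
          f (coset a B1) = coset a' B2 \<and> f (coset b B1) = coset b' B2 \<longrightarrow>
          f (coset (a + b) B1) = coset (a' + b') B2) \<and>
      (\<forall>c. \<forall>a\<in>A1. \<forall>a'\<in>A2. f (coset a B1) = coset a' B2 \<longrightarrow>
          f (coset (scale c a) B1) = coset (scale c a') B2) \<and>
      (\<forall>x. \<forall>a\<in>A1. \<forall>a'\<in>A2. f (coset a B1) = coset a' B2 \<longrightarrow>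
          f (coset (br x a) B1) = coset (br x a') B2))"

end

theory Submission
  imports Defs
begin

locale lieA =
  fixes scale :: "'k::field \<Rightarrow> 'v::ab_group_add \<Rightarrow> 'v"
    and br :: "'v \<Rightarrow> 'v \<Rightarrow> 'v"
  assumes lie: "lie_algebra scale br"
begin

sublocale vs: vector_space scale
  using lie by (simp add: lie_algebra_def)

lemma addL: "br (x + y) z = br x z + br y z" using lie by (simp add: lie_algebra_def)
lemma addR: "br x (y + z) = br x y + br x z" using lie by (simp add: lie_algebra_def)
lemma scL: "br (scale c x) y = scale c (br x y)" using lie by (simp add: lie_algebra_def)
lemma scR: "br x (scale c y) = scale c (br x y)" using lie by (simp add: lie_algebra_def)
lemma self: "br x x = 0" using lie by (simp add: lie_algebra_def)
lemma jac: "br x (br y z) + br y (br z x) + br z (br x y) = 0" using lie by (simp add: lie_algebra_def)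

lemma zeroL: "br 0 y = 0"
  using addL[of 0 0 y] by simp
lemma zeroR: "br x 0 = 0"
  using addR[of x 0 0] by simp
lemma negR: "br x (- y) = - br x y"
  using addR[of x y "-y"] zeroR by (metis add.commute minus_unique right_minus)
lemma negL: "br (- x) y = - br x y"
  using addL[of x "-x" y] zeroL by (metis add.commute minus_unique right_minus)
lemma diffR: "br x (y - z) = br x y - br x z"
  using addR[of x y "-z"] negR by simp
lemma diffL: "br (x - y) z = br x z - br y z"
  using addL[of x "-y" z] negL by simp
lemma antisym: "br x y = - br y x"
proof -
  have "0 = br (x+y) (x+y)" by (simp add: self)
  also have "\<dots> = br x x + br x y + (br y x + br y y)" by (simp add: addL addR add.assoc)
  also have "\<dots> = br x y + br y x" by (simp add: self)
  finally have "br y x + br x y = 0" by (simp add: add.commute)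
  then show ?thesis by (metis minus_unique)
qed

lemma id_sub: "lie_ideal scale br I \<Longrightarrow> vs.subspace I" by (simp add: lie_ideal_def)
lemma id_0: "lie_ideal scale br I \<Longrightarrow> 0 \<in> I" using id_sub vs.subspace_0 by blast
lemma id_add: "lie_ideal scale br I \<Longrightarrow> a \<in> I \<Longrightarrow> b \<in> I \<Longrightarrow> a + b \<in> I" using id_sub vs.subspace_add by blast
lemma id_neg: "lie_ideal scale br I \<Longrightarrow> a \<in> I \<Longrightarrow> - a \<in> I" using id_sub vs.subspace_neg by blast
lemma id_diff: "lie_ideal scale br I \<Longrightarrow> a \<in> I \<Longrightarrow> b \<in> I \<Longrightarrow> a - b \<in> I" using id_sub vs.subspace_diff by blast
lemma id_sc: "lie_ideal scale br I \<Longrightarrow> a \<in> I \<Longrightarrow> scale c a \<in> I" using id_sub vs.subspace_scale by blast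
lemma id_brR: "lie_ideal scale br I \<Longrightarrow> a \<in> I \<Longrightarrow> br x a \<in> I" by (simp add: lie_ideal_def)
lemma id_brL: "lie_ideal scale br I \<Longrightarrow> a \<in> I \<Longrightarrow> br a x \<in> I"
  using id_brR id_neg antisym by metis

lemma id_int: "lie_ideal scale br I \<Longrightarrow> lie_ideal scale br J \<Longrightarrow> lie_ideal scale br (I \<inter> J)"
  unfolding lie_ideal_def by (auto intro: vs.subspace_inter)

lemma id_sum:
  assumes "lie_ideal scale br I" "lie_ideal scale br J"
  shows "lie_ideal scale br {a + c |a c. a \<in> I \<and> c \<in> J}"
  unfolding lie_ideal_def vs.subspace_def
proof (intro conjI allI ballI impI)
  show "0 \<in> {a + c |a c. a \<in> I \<and> c \<in> J}" using assms id_0 by force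
next
  fix x y assume "x \<in> {a + c |a c. a \<in> I \<and> c \<in> J}" "y \<in> {a + c |a c. a \<in> I \<and> c \<in> J}"
  then obtain a c a' c' where "x = a + c" "y = a' + c'" "a \<in> I" "c \<in> J" "a' \<in> I" "c' \<in> J" by blast
  moreover have "x + y = (a + a') + (c + c')" using \<open>x = a + c\<close> \<open>y = a' + c'\<close> by (simp add: algebra_simps)
  ultimately show "x + y \<in> {a + c |a c. a \<in> I \<and> c \<in> J}"
    using assms id_add by blast
next
  fix k x assume "x \<in> {a + c |a c. a \<in> I \<and> c \<in> J}"
  then obtain a c where "x = a + c" "a \<in> I" "c \<in> J" by blast
  then show "scale k x \<in> {a + c |a c. a \<in> I \<and> c \<in> J}"
    using assms id_sc by (auto simp: vs.scale_right_distrib) blast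
next
  fix x y assume "y \<in> {a + c |a c. a \<in> I \<and> c \<in> J}"
  then obtain a c where "y = a + c" "a \<in> I" "c \<in> J" by blast
  then show "br x y \<in> {a + c |a c. a \<in> I \<and> c \<in> J}"
    using assms id_brR by (auto simp: addR) blast
qed

lemma cent_ideal:
  assumes A: "lie_ideal scale br A" and B: "lie_ideal scale br B"
  shows "lie_ideal scale br (centraliser br A B)"
  unfolding lie_ideal_def vs.subspace_def centraliser_def
proof (intro conjI allI ballI impI; simp)
  show "\<forall>a\<in>A. br 0 a \<in> B" using zeroL id_0[OF B] by simp
  show "\<And>x y. \<forall>a\<in>A. br x a \<in> B \<Longrightarrow> \<forall>a\<in>A. br y a \<in> B \<Longrightarrow> \<forall>a\<in>A. br (x + y) a \<in> B"
    using addL id_add[OF B] by simp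
  show "\<And>c x. \<forall>a\<in>A. br x a \<in> B \<Longrightarrow> \<forall>a\<in>A. br (scale c x) a \<in> B"
    using scL id_sc[OF B] by simp
  show "\<And>y c. \<forall>a\<in>A. br c a \<in> B \<Longrightarrow> \<forall>b\<in>A. br (br y c) b \<in> B"
  proof
    fix y c b assume h: "\<forall>a\<in>A. br c a \<in> B" and b: "b \<in> A"
    have j: "br y (br c b) + br c (br b y) + br b (br y c) = 0" by (rule jac)
    have 1: "br y (br c b) \<in> B" using h b id_brR[OF B] by simp
    have 2: "br c (br b y) \<in> B" using h id_brL[OF A b] by simp
    have "br b (br y c) = - (br y (br c b) + br c (br b y))" using j by (metis add.commute minus_unique)
    then have "br b (br y c) \<in> B" using 1 2 id_add[OF B] id_neg[OF B] by metis
    then show "br (br y c) b \<in> B" using antisym id_neg[OF B] by metis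
  qed
qed

lemma mem_coset: "lie_ideal scale br B \<Longrightarrow> y \<in> coset a B \<longleftrightarrow> y - a \<in> B"
proof -
  have "y \<in> (\<lambda>b. a + b) ` B \<longleftrightarrow> (\<exists>b\<in>B. y = a + b)" by blast
  also have "\<dots> \<longleftrightarrow> y - a \<in> B"
  proof
    assume "\<exists>b\<in>B. y = a + b" then show "y - a \<in> B" by auto
  next
    assume "y - a \<in> B" moreover have "y = a + (y - a)" by simp
    ultimately show "\<exists>b\<in>B. y = a + b" by blast
  qed
  finally show ?thesis unfolding coset_def .
qed

lemma cos_eq:
  assumes B: "lie_ideal scale br B"
  shows "coset a B = coset b B \<longleftrightarrow> a - b \<in> B"
proof
  assume "coset a B = coset b B"
  moreover have "a \<in> coset a B" using mem_coset[OF B] id_0[OF B] by simp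
  ultimately show "a - b \<in> B" using mem_coset[OF B] by simp
next
  assume h: "a - b \<in> B"
  show "coset a B = coset b B"
  proof (rule set_eqI)
    fix y
    have "y - b = (y - a) + (a - b)" "y - a = (y - b) - (a - b)" by simp_all
    then show "y \<in> coset a B \<longleftrightarrow> y \<in> coset b B"
      using mem_coset[OF B] h id_add[OF B] id_diff[OF B] by metis
  qed
qed

lemma cos0: "lie_ideal scale br B \<Longrightarrow> coset a B = coset 0 B \<longleftrightarrow> a \<in> B"
  using cos_eq by simp

lemma chief_mid:
  assumes "chief_factor scale br A B" "lie_ideal scale br I" "B \<subseteq> I" "I \<subseteq> A"
  shows "I = B \<or> I = A"
  using assms unfolding chief_factor_def by blast

lemma part1:
  assumes c1: "chief_factor scale br A1 B1" and c2: "chief_factor scale br A2 B2"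
    and iso: "L_isomorphic scale br A1 B1 A2 B2"
  shows "centraliser br A1 B1 = centraliser br A2 B2"
proof -
  have A1: "lie_ideal scale br A1" and B1: "lie_ideal scale br B1" and s1: "B1 \<subseteq> A1"
    using c1 unfolding chief_factor_def by auto
  have A2: "lie_ideal scale br A2" and B2: "lie_ideal scale br B2" and s2: "B2 \<subseteq> A2"
    using c2 unfolding chief_factor_def by auto
  obtain f where bij: "bij_betw f (quot A1 B1) (quot A2 B2)"
    and addf: "\<forall>a\<in>A1. \<forall>b\<in>A1. \<forall>a'\<in>A2. \<forall>b'\<in>A2.
          f (coset a B1) = coset a' B2 \<and> f (coset b B1) = coset b' B2 \<longrightarrow>
          f (coset (a + b) B1) = coset (a' + b') B2"
    and brf: "\<forall>x. \<forall>a\<in>A1. \<forall>a'\<in>A2. f (coset a B1) = coset a' B2 \<longrightarrow>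
          f (coset (br x a) B1) = coset (br x a') B2"
    using iso unfolding L_isomorphic_def by blast
  have img: "\<And>a. a \<in> A1 \<Longrightarrow> \<exists>a'\<in>A2. f (coset a B1) = coset a' B2"
  proof -
    fix a assume "a \<in> A1"
    then have "coset a B1 \<in> quot A1 B1" unfolding quot_def by blast
    then have "f (coset a B1) \<in> quot A2 B2" by (rule bij_betw_apply[OF bij])
    then show "\<exists>a'\<in>A2. f (coset a B1) = coset a' B2" unfolding quot_def by blast
  qed
  have pre: "\<And>a'. a' \<in> A2 \<Longrightarrow> \<exists>a\<in>A1. f (coset a B1) = coset a' B2"
  proof -
    fix a' assume "a' \<in> A2"
    then have "coset a' B2 \<in> quot A2 B2" unfolding quot_def by blast
    then have "coset a' B2 \<in> f ` quot A1 B1" using bij by (simp add: bij_betw_def)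
    then show "\<exists>a\<in>A1. f (coset a B1) = coset a' B2" unfolding quot_def by blast
  qed
  have z: "f (coset 0 B1) = coset 0 B2"
  proof -
    obtain a' where a': "a' \<in> A2" "f (coset 0 B1) = coset a' B2" using img id_0[OF A1] by blast
    have "f (coset (0 + 0) B1) = coset (a' + a') B2" using addf[rule_format, of 0 0 a' a'] a' id_0[OF A1] by simp
    then have "coset a' B2 = coset (a' + a') B2" using a' by simp
    then have "a' - (a' + a') \<in> B2" using cos_eq[OF B2] by blast
    moreover have "a' - (a' + a') = - a'" by simp
    ultimately have "- (- a') \<in> B2" using id_neg[OF B2] by metis
    then have "a' \<in> B2" by simp
    then show ?thesis using a' cos0[OF B2] by simp
  qed
  show ?thesis
  proof (rule set_eqI)
    fix x
    show "x \<in> centraliser br A1 B1 \<longleftrightarrow> x \<in> centraliser br A2 B2"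
    proof
      assume h: "x \<in> centraliser br A1 B1"
      show "x \<in> centraliser br A2 B2" unfolding centraliser_def
      proof (safe)
        fix a' assume "a' \<in> A2"
        then obtain a where a: "a \<in> A1" "f (coset a B1) = coset a' B2" using pre by blast
        have "f (coset (br x a) B1) = coset (br x a') B2" using brf a \<open>a' \<in> A2\<close> by simp
        moreover have "coset (br x a) B1 = coset 0 B1" using h a cos0[OF B1] unfolding centraliser_def by blast
        ultimately have "coset (br x a') B2 = coset 0 B2" using z by simp
        then show "br x a' \<in> B2" using cos0[OF B2] by blast
      qed
    next
      assume h: "x \<in> centraliser br A2 B2"
      show "x \<in> centraliser br A1 B1" unfolding centraliser_def
      proof (safe)
        fix a assume a: "a \<in> A1"
        then obtain a' where a': "a' \<in> A2" "f (coset a B1) = coset a' B2" using img by blast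
        have "f (coset (br x a) B1) = coset (br x a') B2" using brf a a' by simp
        moreover have "coset (br x a') B2 = coset 0 B2" using h a' cos0[OF B2] unfolding centraliser_def by blast
        ultimately have "f (coset (br x a) B1) = f (coset 0 B1)" using z by simp
        moreover have "coset (br x a) B1 \<in> quot A1 B1" "coset 0 B1 \<in> quot A1 B1"
          unfolding quot_def using a id_brR[OF A1] id_0[OF A1] by blast+
        ultimately have "coset (br x a) B1 = coset 0 B1" using bij unfolding bij_betw_def by (meson inj_onD)
        then show "br x a \<in> B1" using cos0[OF B1] by blast
      qed
    qed
  qed
qed

lemma meet:
  assumes c1: "chief_factor scale br A1 B1" and na: "\<not> abelian_factor br A1 B1"
  shows "A1 \<inter> centraliser br A1 B1 = B1"
proof -
  have A1: "lie_ideal scale br A1" and B1: "lie_ideal scale br B1" and s1: "B1 \<subseteq> A1"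
    using c1 unfolding chief_factor_def by auto
  have I: "lie_ideal scale br (A1 \<inter> centraliser br A1 B1)"
    using id_int[OF A1 cent_ideal[OF A1 B1]] .
  have "B1 \<subseteq> A1 \<inter> centraliser br A1 B1"
    using s1 id_brL[OF B1] unfolding centraliser_def by auto
  then have "A1 \<inter> centraliser br A1 B1 = B1 \<or> A1 \<inter> centraliser br A1 B1 = A1"
    using chief_mid[OF c1 I] by blast
  moreover have "A1 \<inter> centraliser br A1 B1 \<noteq> A1"
    using na unfolding abelian_factor_def centraliser_def by blast
  ultimately show ?thesis by blast
qed

lemma cover:
  assumes c1: "chief_factor scale br A1 B1" and c2: "chief_factor scale br A2 B2"
    and na: "\<not> abelian_factor br A2 B2"
    and eq: "centraliser br A1 B1 = centraliser br A2 B2"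
  shows "A1 \<subseteq> {a + c |a c. a \<in> A2 \<and> c \<in> centraliser br A1 B1}"
proof -
  let ?C = "centraliser br A1 B1"
  let ?S = "{a + c |a c. a \<in> A2 \<and> c \<in> ?C}"
  have A1: "lie_ideal scale br A1" and B1: "lie_ideal scale br B1" and s1: "B1 \<subseteq> A1"
    using c1 unfolding chief_factor_def by auto
  have A2: "lie_ideal scale br A2" and B2: "lie_ideal scale br B2" and s2: "B2 \<subseteq> A2"
    using c2 unfolding chief_factor_def by auto
  have C: "lie_ideal scale br ?C" using cent_ideal[OF A1 B1] .
  have S: "lie_ideal scale br ?S" using id_sum[OF A2 C] .
  have CS: "?C \<subseteq> ?S"
  proof
    fix c assume "c \<in> ?C" moreover have "c = 0 + c" by simp
    ultimately show "c \<in> ?S" using id_0[OF A2] by blast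
  qed
  have A2S: "A2 \<subseteq> ?S"
  proof
    fix c assume "c \<in> A2" moreover have "c = c + 0" by simp
    ultimately show "c \<in> ?S" using id_0[OF C] by blast
  qed
  have B1C: "B1 \<subseteq> ?C" using id_brL[OF B1] unfolding centraliser_def by auto
  have I: "lie_ideal scale br (A1 \<inter> ?S)" using id_int[OF A1 S] .
  have "B1 \<subseteq> A1 \<inter> ?S" using s1 B1C CS by blast
  then have cases: "A1 \<inter> ?S = B1 \<or> A1 \<inter> ?S = A1" using chief_mid[OF c1 I] by blast
  have "A1 \<inter> ?S \<noteq> B1"
  proof
    assume h: "A1 \<inter> ?S = B1"
    have "A2 \<subseteq> ?C"
    proof
      fix x assume x: "x \<in> A2"
      show "x \<in> ?C" unfolding centraliser_def
      proof safe
        fix a assume a: "a \<in> A1"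
        have "br x a \<in> A1" using id_brR[OF A1 a] .
        moreover have "br x a \<in> A2" using id_brL[OF A2 x] .
        ultimately show "br x a \<in> B1" using h A2S by blast
      qed
    qed
    then have "abelian_factor br A2 B2" using eq unfolding abelian_factor_def centraliser_def by blast
    then show False using na by blast
  qed
  then show ?thesis using cases by blast
qed

lemma part2:
  assumes c1: "chief_factor scale br A1 B1" and c2: "chief_factor scale br A2 B2"
    and na1: "\<not> abelian_factor br A1 B1" and na2: "\<not> abelian_factor br A2 B2"
    and eq: "centraliser br A1 B1 = centraliser br A2 B2"
  shows "L_isomorphic scale br A1 B1 A2 B2"
proof -
  let ?C = "centraliser br A1 B1"
  have A1: "lie_ideal scale br A1" and B1: "lie_ideal scale br B1" and s1: "B1 \<subseteq> A1"
    using c1 unfolding chief_factor_def by auto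
  have A2: "lie_ideal scale br A2" and B2: "lie_ideal scale br B2" and s2: "B2 \<subseteq> A2"
    using c2 unfolding chief_factor_def by auto
  have C: "lie_ideal scale br ?C" using cent_ideal[OF A1 B1] .
  have m1: "A1 \<inter> ?C = B1" using meet[OF c1 na1] .
  have m2: "A2 \<inter> ?C = B2" using meet[OF c2 na2] eq by simp
  have cov1: "A1 \<subseteq> {a + c |a c. a \<in> A2 \<and> c \<in> ?C}" using cover[OF c1 c2 na2 eq] .
  have cov2: "A2 \<subseteq> {a + c |a c. a \<in> A1 \<and> c \<in> ?C}" using cover[OF c2 c1 na1 eq[symmetric]] eq by simp
  have ex1: "\<And>a. a \<in> A1 \<Longrightarrow> \<exists>a'\<in>A2. a - a' \<in> ?C"
  proof -
    fix a assume "a \<in> A1"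
    then obtain a' c where "a = a' + c" "a' \<in> A2" "c \<in> ?C" using cov1 by blast
    moreover have "a - a' = c" using \<open>a = a' + c\<close> by simp
    ultimately have "a - a' \<in> ?C" by simp
    then show "\<exists>a'\<in>A2. a - a' \<in> ?C" using \<open>a' \<in> A2\<close> by blast
  qed
  have ex2: "\<And>a'. a' \<in> A2 \<Longrightarrow> \<exists>a\<in>A1. a - a' \<in> ?C"
  proof -
    fix a' assume "a' \<in> A2"
    then obtain a c where "a' = a + c" "a \<in> A1" "c \<in> ?C" using cov2 by blast
    moreover have "a - a' = - c" using \<open>a' = a + c\<close> by simp
    ultimately have "a - a' \<in> ?C" using id_neg[OF C] by simp
    then show "\<exists>a\<in>A1. a - a' \<in> ?C" using \<open>a \<in> A1\<close> by blast
  qed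
  define f where "f X = {a' \<in> A2. \<exists>a\<in>X. a - a' \<in> ?C}" for X
  have key: "\<And>a a'. a \<in> A1 \<Longrightarrow> a' \<in> A2 \<Longrightarrow> a - a' \<in> ?C \<Longrightarrow> f (coset a B1) = coset a' B2"
  proof -
    fix a a' assume a: "a \<in> A1" and a': "a' \<in> A2" and r: "a - a' \<in> ?C"
    show "f (coset a B1) = coset a' B2"
    proof (rule set_eqI)
      fix y
      have "y \<in> f (coset a B1) \<longleftrightarrow> y \<in> A2 \<and> (\<exists>z\<in>coset a B1. z - y \<in> ?C)"
        unfolding f_def by blast
      also have "\<dots> \<longleftrightarrow> y \<in> A2 \<and> a - y \<in> ?C"
      proof (intro conj_cong refl iffI)
        assume "\<exists>z\<in>coset a B1. z - y \<in> ?C"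
        then obtain z where z: "z - a \<in> B1" "z - y \<in> ?C" using mem_coset[OF B1] by blast
        have e: "a - y = (z - y) - (z - a)" by simp
        have "z - a \<in> ?C" using z(1) m1 by blast
        then show "a - y \<in> ?C" unfolding e by (rule id_diff[OF C z(2)])
      next
        assume "a - y \<in> ?C"
        moreover have "a \<in> coset a B1" using mem_coset[OF B1] id_0[OF B1] by simp
        ultimately show "\<exists>z\<in>coset a B1. z - y \<in> ?C" by blast
      qed
      also have "\<dots> \<longleftrightarrow> y \<in> coset a' B2"
      proof
        assume h: "y \<in> A2 \<and> a - y \<in> ?C"
        have e: "y - a' = (a - a') - (a - y)" by simp
        have "y - a' \<in> ?C" unfolding e using h by (intro id_diff[OF C r]) simp
        moreover have "y - a' \<in> A2" using h a' id_diff[OF A2] by blast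
        ultimately show "y \<in> coset a' B2" using m2 mem_coset[OF B2] by blast
      next
        assume "y \<in> coset a' B2"
        then have h: "y - a' \<in> B2" using mem_coset[OF B2] by blast
        then have "y - a' \<in> ?C" "y - a' \<in> A2" using m2 by blast+
        have e1: "y = (y - a') + a'" and e2: "a - y = (a - a') - (y - a')" by simp_all
        have "y \<in> A2" by (subst e1, rule id_add[OF A2 \<open>y - a' \<in> A2\<close> a'])
        moreover have "a - y \<in> ?C" unfolding e2 by (rule id_diff[OF C r \<open>y - a' \<in> ?C\<close>])
        ultimately show "y \<in> A2 \<and> a - y \<in> ?C" by blast
      qed
      finally show "y \<in> f (coset a B1) \<longleftrightarrow> y \<in> coset a' B2" .
    qed
  qed
  have rel: "\<And>a a'. a \<in> A1 \<Longrightarrow> a' \<in> A2 \<Longrightarrow> f (coset a B1) = coset a' B2 \<Longrightarrow> a - a' \<in> ?C"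
  proof -
    fix a a' assume a: "a \<in> A1" and a': "a' \<in> A2" and e: "f (coset a B1) = coset a' B2"
    obtain a'' where a'': "a'' \<in> A2" "a - a'' \<in> ?C" using ex1[OF a] by blast
    have "coset a'' B2 = coset a' B2" using key[OF a a''] e by simp
    then have "a'' - a' \<in> B2" using cos_eq[OF B2] by blast
    then have "a'' - a' \<in> ?C" using m2 by blast
    moreover have e: "a - a' = (a - a'') + (a'' - a')" by simp
    ultimately show "a - a' \<in> ?C" unfolding e using id_add[OF C a''(2)] by blast
  qed
  have bij: "bij_betw f (quot A1 B1) (quot A2 B2)"
    unfolding bij_betw_def
  proof
    show "inj_on f (quot A1 B1)"
    proof (rule inj_onI)
      fix X Y assume "X \<in> quot A1 B1" "Y \<in> quot A1 B1" and e: "f X = f Y"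
      then obtain a b where ab: "X = coset a B1" "Y = coset b B1" "a \<in> A1" "b \<in> A1"
        unfolding quot_def by blast
      obtain a' where a': "a' \<in> A2" "a - a' \<in> ?C" using ex1 ab by blast
      obtain b' where b': "b' \<in> A2" "b - b' \<in> ?C" using ex1 ab by blast
      have "coset a' B2 = coset b' B2" using key[OF _ a'] key[OF _ b'] ab e by simp
      then have "a' - b' \<in> B2" using cos_eq[OF B2] by blast
      then have ab': "a' - b' \<in> ?C" using m2 by blast
      have e: "a - b = ((a - a') + (a' - b')) - (b - b')" by simp
      have "a - b \<in> ?C" unfolding e by (rule id_diff[OF C id_add[OF C a'(2) ab'] b'(2)])
      moreover have "a - b \<in> A1" using ab id_diff[OF A1] by blast
      ultimately have "a - b \<in> B1" using m1 by blast
      then show "X = Y" using ab cos_eq[OF B1] by blast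
    qed
    show "f ` quot A1 B1 = quot A2 B2"
    proof safe
      fix X assume "X \<in> quot A1 B1"
      then obtain a where a: "X = coset a B1" "a \<in> A1" unfolding quot_def by blast
      obtain a' where a': "a' \<in> A2" "a - a' \<in> ?C" using ex1 a by blast
      show "f X \<in> quot A2 B2" using key[OF a(2) a'] a a' unfolding quot_def by blast
    next
      fix Y assume "Y \<in> quot A2 B2"
      then obtain a' where a': "Y = coset a' B2" "a' \<in> A2" unfolding quot_def by blast
      obtain a where a: "a \<in> A1" "a - a' \<in> ?C" using ex2 a' by blast
      have "f (coset a B1) = Y" using key[OF a(1) a'(2) a(2)] a' by simp
      moreover have "coset a B1 \<in> quot A1 B1" using a unfolding quot_def by blast
      ultimately show "Y \<in> f ` quot A1 B1" by blast
    qed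
  qed
  have addf: "\<forall>a\<in>A1. \<forall>b\<in>A1. \<forall>a'\<in>A2. \<forall>b'\<in>A2.
          f (coset a B1) = coset a' B2 \<and> f (coset b B1) = coset b' B2 \<longrightarrow>
          f (coset (a + b) B1) = coset (a' + b') B2"
  proof (intro ballI impI)
    fix a b a' b' assume "a \<in> A1" "b \<in> A1" "a' \<in> A2" "b' \<in> A2"
      and "f (coset a B1) = coset a' B2 \<and> f (coset b B1) = coset b' B2"
    then have r: "a - a' \<in> ?C" "b - b' \<in> ?C" using rel by blast+
    have e: "(a + b) - (a' + b') = (a - a') + (b - b')" by simp
    have "(a + b) - (a' + b') \<in> ?C" unfolding e by (rule id_add[OF C r])
    then show "f (coset (a + b) B1) = coset (a' + b') B2"
      using key id_add[OF A1] id_add[OF A2] \<open>a \<in> A1\<close> \<open>b \<in> A1\<close> \<open>a' \<in> A2\<close> \<open>b' \<in> A2\<close> by blast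
  qed
  have scf: "\<forall>c. \<forall>a\<in>A1. \<forall>a'\<in>A2. f (coset a B1) = coset a' B2 \<longrightarrow>
          f (coset (scale c a) B1) = coset (scale c a') B2"
  proof (intro allI ballI impI)
    fix c a a' assume "a \<in> A1" "a' \<in> A2" "f (coset a B1) = coset a' B2"
    then have r: "a - a' \<in> ?C" using rel by blast
    have e: "scale c a - scale c a' = scale c (a - a')" by (simp add: vs.scale_right_diff_distrib)
    have "scale c a - scale c a' \<in> ?C" unfolding e by (rule id_sc[OF C r])
    then show "f (coset (scale c a) B1) = coset (scale c a') B2"
      using key id_sc[OF A1] id_sc[OF A2] \<open>a \<in> A1\<close> \<open>a' \<in> A2\<close> by blast
  qed
  have brf: "\<forall>x. \<forall>a\<in>A1. \<forall>a'\<in>A2. f (coset a B1) = coset a' B2 \<longrightarrow>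
          f (coset (br x a) B1) = coset (br x a') B2"
  proof (intro allI ballI impI)
    fix x a a' assume "a \<in> A1" "a' \<in> A2" "f (coset a B1) = coset a' B2"
    then have r: "a - a' \<in> ?C" using rel by blast
    have e: "br x a - br x a' = br x (a - a')" by (simp add: diffR)
    have "br x a - br x a' \<in> ?C" unfolding e by (rule id_brR[OF C r])
    then show "f (coset (br x a) B1) = coset (br x a') B2"
      using key id_brR[OF A1] id_brR[OF A2] \<open>a \<in> A1\<close> \<open>a' \<in> A2\<close> by blast
  qed
  show ?thesis unfolding L_isomorphic_def using bij addf scf brf by blast
qed

end

theorem theorem2p1:
  fixes scale :: "'k::field \<Rightarrow> 'v::ab_group_add \<Rightarrow> 'v"
    and br :: "'v \<Rightarrow> 'v \<Rightarrow> 'v"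
    and A1 B1 A2 B2 :: "'v set"
  assumes "lie_algebra scale br"
    and "finite_dimensional scale"
    and "chief_factor scale br A1 B1"
    and "chief_factor scale br A2 B2"
  shows "(L_isomorphic scale br A1 B1 A2 B2 \<longrightarrow>
            centraliser br A1 B1 = centraliser br A2 B2)
       \<and> (\<not> abelian_factor br A1 B1 \<and> \<not> abelian_factor br A2 B2 \<longrightarrow>
            (L_isomorphic scale br A1 B1 A2 B2 \<longleftrightarrow>
             centraliser br A1 B1 = centraliser br A2 B2))"
proof -
  interpret lieA scale br using assms(1) by unfold_locales
  show ?thesis using part1[OF assms(3,4)] part2[OF assms(3,4)] by blast
qed

end
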